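(* Fix an integer $r\ge2$, $\varepsilon,s>0$, $\gamma=(\gamma_1,\dots,\gamma_r)$ with $\gamma_i\in(0,1)$, $\sum_i\gamma_i=1$, $i^\star=\arg\max_i\gamma_i$, and let $\Psi=\left(\frac{\gamma_{i^\star}\log d}{d\,r^{r-1}(r-1)\prod_{i=1}^r\gamma_i}\right)^{1/(r-1)}$. Let $d=d(\varepsilon,s,\gamma,r)$ be sufficiently large, and for each $i\in[r]$ fix $S_i\subseteq V_i$ with $|S_i|\le s\gamma_i r n\Psi$. Then for $p=d/n^{r-1}$, with probability $1-\exp(-\Omega(n))$ there is no independent set $S'$ of $\mathcal{H}(r,n,p)$ satisfying $|S'\cap S_i|\ge\varepsilon\gamma_i r n\Psi$ for every $1\le i\le r$.
   Context: $\mathcal{H}(r,n,p)$: random $r$-uniform $r$-partite hypergraph with vertex set $[n]\times[r]$, parts $V_i=[n]\times\{i\}$, each $e\in V_1\times\cdots\times V_r$ an edge independently with probability $p$. An independent set is a vertex set containing no edge. *)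

theory Defs
  imports "HOL-Probability.Probability"
begin

text \<open>Vertices of H(r,n,p): pairs (v,i) with v < n and i < r (0-indexed version of [n] x [r]).
  Part V_i = {..<n} x {i}.\<close>
definition hg_vertices :: "nat \<Rightarrow> nat \<Rightarrow> (nat \<times> nat) set" where
  "hg_vertices r n = {..<n} \<times> {..<r}"

text \<open>Potential edges: elements of V_1 x ... x V_r, encoded as functions e with e i < n
  (the vertex of the edge in part i is (e i, i)).\<close>
definition hg_edges :: "nat \<Rightarrow> nat \<Rightarrow> (nat \<Rightarrow> nat) set" where
  "hg_edges r n = PiE {..<r} (\<lambda>_. {..<n})"

definition edge_verts :: "nat \<Rightarrow> (nat \<Rightarrow> nat) \<Rightarrow> (nat \<times> nat) set" where
  "edge_verts r e = (\<lambda>i. (e i, i)) ` {..<r}"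

definition hg_pmf :: "nat \<Rightarrow> nat \<Rightarrow> real \<Rightarrow> ((nat \<Rightarrow> nat) \<Rightarrow> bool) pmf" where
  "hg_pmf r n p = Pi_pmf (hg_edges r n) False (\<lambda>_. bernoulli_pmf p)"

definition hg_independent ::
  "nat \<Rightarrow> nat \<Rightarrow> ((nat \<Rightarrow> nat) \<Rightarrow> bool) \<Rightarrow> (nat \<times> nat) set \<Rightarrow> bool" where
  "hg_independent r n H S \<longleftrightarrow>
     S \<subseteq> hg_vertices r n \<and> (\<forall>e\<in>hg_edges r n. H e \<longrightarrow> \<not> edge_verts r e \<subseteq> S)"

definition Psi :: "nat \<Rightarrow> (nat \<Rightarrow> real) \<Rightarrow> real \<Rightarrow> real" where
  "Psi r \<gamma> d = (Max (\<gamma> ` {..<r}) * ln d /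
      (d * real r ^ (r - 1) * (real r - 1) * (\<Prod>i<r. \<gamma> i))) powr (1 / (real r - 1))"

end

theory Submission
  imports Defs
begin

lemma prob_no_edges:
  assumes "E \<subseteq> hg_edges r n" "0 \<le> p" "p \<le> 1"
  shows "measure_pmf.prob (hg_pmf r n p) {H. \<forall>e\<in>E. \<not> H e} = (1-p)^card E"
proof -
  have fin: "finite (hg_edges r n)" by (simp add: hg_edges_def finite_PiE)
  have fE: "finite E" using assms(1) fin finite_subset by blast
  have eq: "{H. \<forall>e\<in>E. \<not> H e} = Pi (hg_edges r n) (\<lambda>e. if e\<in>E then {False} else UNIV)"
    using assms(1) by (auto simp: Pi_def)
  have "measure_pmf.prob (hg_pmf r n p) {H. \<forall>e\<in>E. \<not> H e}
     = (\<Prod>e\<in>hg_edges r n. measure_pmf.prob (bernoulli_pmf p) (if e\<in>E then {False} else UNIV))"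
    unfolding eq hg_pmf_def by (simp add: measure_Pi_pmf_Pi fin)
  also have "\<dots> = (\<Prod>e\<in>hg_edges r n. if e \<in> E then 1-p else 1)"
    by (intro prod.cong) (auto simp: measure_pmf_single assms)
  also have "\<dots> = (1-p)^card E"
    using assms(1) fin by (simp add: prod.If_cases Int_absorb1 Int_absorb2)
  finally show ?thesis .
qed

lemma aux_eq:
  fixes d e R q P a Ps g l :: real
  assumes "d \<noteq> 0" "q \<noteq> 0" "a \<noteq> 0" "P \<noteq> 0"
  shows "d * e * (R * q) * (Ps * (g * l / (d * q * a * P))) * P = R * Ps * (e * g * l / a)"
  using assms by (simp add: field_simps)

theorem mainTheorem19:
  fixes r :: nat and \<epsilon> s :: real and \<gamma> :: "nat \<Rightarrow> real"
  assumes "r \<ge> 2" and "\<epsilon> > 0" and "s > 0"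
    and "\<forall>i<r. 0 < \<gamma> i \<and> \<gamma> i < 1"
    and "(\<Sum>i<r. \<gamma> i) = 1"
  shows "\<exists>d0. \<forall>d\<ge>d0. \<exists>c>0. \<exists>N. \<forall>n\<ge>N. \<forall>S :: nat \<Rightarrow> (nat \<times> nat) set.
    (\<forall>i<r. S i \<subseteq> {..<n} \<times> {i} \<and>
       real (card (S i)) \<le> s * \<gamma> i * real r * real n * Psi r \<gamma> d) \<longrightarrow>
    measure_pmf.prob (hg_pmf r n (d / real n ^ (r - 1)))
      {H. \<exists>S'. hg_independent r n H S' \<and>
         (\<forall>i<r. real (card (S' \<inter> S i)) \<ge> \<epsilon> * \<gamma> i * real r * real n * Psi r \<gamma> d)}
    \<le> exp (- c * real n)"
proof -
  define gs where "gs = Max (\<gamma> ` {..<r})"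
  have r0: "r > 0" using assms(1) by simp
  have gs_pos: "gs > 0"
  proof -
    have "gs \<in> \<gamma> ` {..<r}" unfolding gs_def using r0 by (intro Max_in) auto
    then show ?thesis using assms(4) by auto
  qed
  have Pg: "(\<Prod>i<r. \<gamma> i) > 0" using assms(4) by (intro prod_pos) auto
  have r1: "real r - 1 > 0" using assms(1) by simp
  define L where "L = s * ln 2 * (real r - 1) / (\<epsilon>^r * gs)"
  show ?thesis
  proof (rule exI[of _ "max 2 (exp (L+1))"], intro allI impI)
    fix d :: real assume d: "max 2 (exp(L+1)) \<le> d"
    have d2: "d \<ge> 2" using d by simp
    have "ln (exp (L+1)) \<le> ln d" using d by (intro ln_mono) auto
    hence lnd: "ln d > L" by simp
    have lnpos: "ln d > 0" using d2 by simp
    define X where "X = gs * ln d / (d * real r^(r-1) * (real r - 1) * (\<Prod>i<r. \<gamma> i))"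
    have Xpos: "X > 0" unfolding X_def using gs_pos lnpos d2 r1 Pg r0 by (intro divide_pos_pos mult_pos_pos) auto
    define \<Psi> where "\<Psi> = Psi r \<gamma> d"
    have PsiX: "\<Psi> = X powr (1/(real r - 1))" by (simp add: Psi_def \<Psi>_def X_def gs_def)
    have Psipos: "\<Psi> > 0" using PsiX Xpos by simp
    have rr: "real (r-1) = real r - 1" using r0 by (simp add: of_nat_diff)
    have Psipow: "\<Psi>^(r-1) = X"
    proof -
      have "\<Psi>^(r-1) = \<Psi> powr (real (r-1))" using Psipos by (simp add: powr_realpow)
      also have "\<dots> = X powr (1/(real r - 1) * (real r - 1))" unfolding PsiX rr by (simp add: powr_powr)
      also have "\<dots> = X" using r1 Xpos by simp
      finally show ?thesis .
    qed
    define K where "K = d * (\<epsilon>*r*\<Psi>)^r * (\<Prod>i<r. \<gamma> i)"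
    have Keq: "K = r*\<Psi>*(\<epsilon>^r*gs*ln d/(real r - 1))"
    proof -
      have rs: "r = Suc (r-1)" using r0 by simp
      have "K = d * \<epsilon>^r * (real r * real r^(r-1)) * (\<Psi> * \<Psi>^(r-1)) * (\<Prod>i<r. \<gamma> i)"
        unfolding K_def by (subst (1 2) rs, simp only: power_mult_distrib power_Suc) (simp add: rs[symmetric] power_mult_distrib)
      also have "\<dots> = r*\<Psi>*(\<epsilon>^r*gs*ln d/(real r - 1))"
        unfolding Psipow X_def using d2 r1 Pg r0 by (intro aux_eq) (auto simp del: prod_zero_iff)
      finally show ?thesis .
    qed
    define c where "c = K - s*r*\<Psi>*ln 2"
    have cpos: "c > 0"
    proof -
      have "\<epsilon>^r * gs > 0" using assms(2) gs_pos by simp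
      hence "s * ln 2 < \<epsilon>^r*gs*ln d/(real r - 1)"
        using lnd r1 unfolding L_def by (simp add: field_simps)
      hence "r*\<Psi>*(s * ln 2) < r*\<Psi>*(\<epsilon>^r*gs*ln d/(real r - 1))"
        using Psipos r0 by (intro mult_strict_left_mono) auto
      thus ?thesis unfolding c_def Keq by (simp add: algebra_simps)
    qed
    show "\<exists>c>0. \<exists>N. \<forall>n\<ge>N. \<forall>S :: nat \<Rightarrow> (nat \<times> nat) set.
    (\<forall>i<r. S i \<subseteq> {..<n} \<times> {i} \<and>
       real (card (S i)) \<le> s * \<gamma> i * real r * real n * Psi r \<gamma> d) \<longrightarrow>
    measure_pmf.prob (hg_pmf r n (d / real n ^ (r - 1)))
      {H. \<exists>S'. hg_independent r n H S' \<and>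
         (\<forall>i<r. real (card (S' \<inter> S i)) \<ge> \<epsilon> * \<gamma> i * real r * real n * Psi r \<gamma> d)}
    \<le> exp (- c * real n)"
    proof (rule exI[of _ c], intro conjI cpos, rule exI[of _ "nat \<lceil>d\<rceil> + 1"], intro allI impI)
      fix n :: nat and S :: "nat \<Rightarrow> (nat \<times> nat) set"
      assume n: "nat \<lceil>d\<rceil> + 1 \<le> n"
        and HS: "\<forall>i<r. S i \<subseteq> {..<n} \<times> {i} \<and>
           real (card (S i)) \<le> s * \<gamma> i * real r * real n * Psi r \<gamma> d"
      define p where "p = d / real n^(r-1)"
      have nd: "real n \<ge> d" using n by linarith
      have n1: "n \<ge> 1" using n by simp
      have npow: "real n ^ (r-1) \<ge> real n"
        using power_increasing[of 1 "r-1" "real n"] n1 assms(1) by simp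
      have p0: "0 \<le> p" unfolding p_def using d2 by simp
      have p1: "p \<le> 1" unfolding p_def using order_trans[OF nd npow] d2 n1 by (simp add: divide_le_eq_1)
      define t where "t i = \<epsilon> * \<gamma> i * real r * real n * \<Psi>" for i
      have t0: "t i \<ge> 0" if "i < r" for i using that assms(2,4) Psipos unfolding t_def by (simp add: less_imp_le)
      define U where "U = (\<Union>i<r. S i)"
      have finS: "finite (S i)" if "i < r" for i
        using HS that finite_subset[of "S i" "{..<n} \<times> {i}"] by auto
      have finU: "finite U" unfolding U_def using finS by auto
      define EA where "EA A = PiE {..<r} (\<lambda>i. {v. (v,i) \<in> A \<inter> S i})" for A
      define G where "G = {A. A \<subseteq> U \<and> (\<forall>i<r. t i \<le> card (A \<inter> S i))}"
      have finG: "finite G" unfolding G_def using finU by (auto intro: finite_subset[of _ "Pow U"])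
      have sub: "{H. \<exists>S'. hg_independent r n H S' \<and>
         (\<forall>i<r. real (card (S' \<inter> S i)) \<ge> \<epsilon> * \<gamma> i * real r * real n * Psi r \<gamma> d)}
         \<subseteq> (\<Union>A\<in>G. {H. \<forall>e\<in>EA A. \<not> H e})"
      proof
        fix H assume "H \<in> {H. \<exists>S'. hg_independent r n H S' \<and>
         (\<forall>i<r. real (card (S' \<inter> S i)) \<ge> \<epsilon> * \<gamma> i * real r * real n * Psi r \<gamma> d)}"
        then obtain S' where ind: "hg_independent r n H S'"
          and big: "\<forall>i<r. t i \<le> card (S' \<inter> S i)" unfolding t_def \<Psi>_def by auto
        have SU: "S i \<subseteq> U" if "i < r" for i using that unfolding U_def by auto
        have AG: "S' \<inter> U \<in> G" unfolding G_def using big SU by (auto simp: Int_assoc Int_absorb1)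
        have "\<not> H e" if e: "e \<in> EA (S' \<inter> U)" for e
        proof -
          have "e \<in> hg_edges r n" using e HS unfolding EA_def hg_edges_def by (auto simp: PiE_def Pi_def)
          moreover have "edge_verts r e \<subseteq> S'" using e unfolding EA_def edge_verts_def by (auto simp: PiE_def Pi_def)
          ultimately show ?thesis using ind unfolding hg_independent_def by auto
        qed
        thus "H \<in> (\<Union>A\<in>G. {H. \<forall>e\<in>EA A. \<not> H e})" using AG by auto
      qed
      have each: "measure_pmf.prob (hg_pmf r n p) {H. \<forall>e\<in>EA A. \<not> H e} \<le> exp (- K * n)"
        if AG: "A \<in> G" for A
      proof -
        have EAsub: "EA A \<subseteq> hg_edges r n" using HS unfolding EA_def hg_edges_def by (auto simp: PiE_def Pi_def)
        have cardi: "card {v. (v,i) \<in> A \<inter> S i} = card (A \<inter> S i)" if "i < r" for i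
        proof -
          have "A \<inter> S i = (\<lambda>v. (v,i)) ` {v. (v,i) \<in> A \<inter> S i}" using HS that by auto
          moreover have "inj_on (\<lambda>v. (v,i)) {v. (v,i) \<in> A \<inter> S i}" by (auto simp: inj_on_def)
          ultimately show ?thesis by (metis card_image)
        qed
        have cardEA: "real (card (EA A)) = (\<Prod>i<r. real (card (A \<inter> S i)))"
          unfolding EA_def by (simp only: card_PiE finite_lessThan of_nat_prod) (intro prod.cong refl, metis cardi lessThan_iff)
        have "(\<Prod>i<r. t i) \<le> (\<Prod>i<r. real (card (A \<inter> S i)))"
          using AG t0 unfolding G_def by (intro prod_mono) auto
        moreover have "(\<Prod>i<r. t i) = (\<Prod>i<r. \<gamma> i) * (\<epsilon> * real r * real n * \<Psi>)^r"
          unfolding t_def by (simp add: prod.distrib mult.commute mult.left_commute power_mult_distrib)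
        ultimately have cE: "(\<Prod>i<r. \<gamma> i) * (\<epsilon> * real r * real n * \<Psi>)^r \<le> real (card (EA A))"
          using cardEA by simp
        have pK: "p * ((\<Prod>i<r. \<gamma> i) * (\<epsilon> * real r * real n * \<Psi>)^r) = K * n"
        proof -
          have rs: "r = Suc (r-1)" using r0 by simp
          have "real n ^ r = real n * real n ^ (r-1)" by (subst rs) simp
          thus ?thesis unfolding p_def K_def using n1 by (simp add: power_mult_distrib field_simps)
        qed
        have "measure_pmf.prob (hg_pmf r n p) {H. \<forall>e\<in>EA A. \<not> H e} = (1-p)^card (EA A)"
          by (rule prob_no_edges[OF EAsub p0 p1])
        also have "\<dots> \<le> exp (-p)^card (EA A)"
          using p1 by (intro power_mono) (use exp_ge_add_one_self[of "-p"] in auto)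
        also have "\<dots> = exp (- p * card (EA A))" by (simp add: exp_of_nat_mult[symmetric] mult.commute)
        also have "\<dots> \<le> exp (- K * n)"
          using mult_left_mono[OF cE p0] pK by simp
        finally show ?thesis .
      qed
      have cardU: "real (card U) \<le> s * real r * real n * \<Psi>"
      proof -
        have "card U \<le> (\<Sum>i<r. card (S i))" unfolding U_def by (rule card_UN_le) simp
        hence "real (card U) \<le> (\<Sum>i<r. real (card (S i)))" by (metis of_nat_le_iff of_nat_sum)
        also have "\<dots> \<le> (\<Sum>i<r. \<gamma> i * (s * real r * real n * \<Psi>))"
          using HS unfolding \<Psi>_def by (intro sum_mono) (auto simp: mult.commute mult.left_commute)
        also have "\<dots> = s * real r * real n * \<Psi>" by (simp add: sum_distrib_right[symmetric] assms(5))
        finally show ?thesis .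
      qed
      have "measure_pmf.prob (hg_pmf r n (d / real n ^ (r - 1)))
      {H. \<exists>S'. hg_independent r n H S' \<and>
         (\<forall>i<r. real (card (S' \<inter> S i)) \<ge> \<epsilon> * \<gamma> i * real r * real n * Psi r \<gamma> d)}
        \<le> measure_pmf.prob (hg_pmf r n p) (\<Union>A\<in>G. {H. \<forall>e\<in>EA A. \<not> H e})"
        unfolding p_def by (rule measure_pmf.finite_measure_mono[OF sub]) simp
      also have "\<dots> \<le> (\<Sum>A\<in>G. measure_pmf.prob (hg_pmf r n p) {H. \<forall>e\<in>EA A. \<not> H e})"
        by (rule measure_pmf.finite_measure_subadditive_finite[OF finG]) auto
      also have "\<dots> \<le> (\<Sum>A\<in>G. exp (- K * n))" by (intro sum_mono each)
      also have "\<dots> = real (card G) * exp (- K * n)" by simp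
      also have "\<dots> \<le> 2 ^ card U * exp (- K * n)"
      proof -
        have "card G \<le> card (Pow U)" using finU unfolding G_def by (intro card_mono) auto
        hence "real (card G) \<le> 2 ^ card U" using finU by (simp add: card_Pow)
        thus ?thesis by simp
      qed
      also have "\<dots> \<le> exp (ln 2 * (s * real r * real n * \<Psi>)) * exp (- K * n)"
      proof -
        have "(2::real) ^ card U = exp (ln 2 * real (card U))" by (subst mult.commute, subst exp_of_nat_mult) simp
        also have "\<dots> \<le> exp (ln 2 * (s * real r * real n * \<Psi>))" using cardU by simp
        finally show ?thesis by simp
      qed
      also have "\<dots> = exp (- c * real n)" unfolding c_def by (simp add: exp_add[symmetric] algebra_simps)
      finally show "measure_pmf.prob (hg_pmf r n (d / real n ^ (r - 1)))
      {H. \<exists>S'. hg_independent r n H S' \<and>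
         (\<forall>i<r. real (card (S' \<inter> S i)) \<ge> \<epsilon> * \<gamma> i * real r * real n * Psi r \<gamma> d)}
        \<le> exp (- c * real n)" .
    qed
  qed
qed

end
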